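(* Let $p/q$ be a positive rational in lowest terms ($p,q\ge1$), and write $p=p_1^2+p_2^2+p_3^2+p_4^2$ with integers $p_j\ge0$. Put $A=p_1^2-p_2^2+p_3^2-p_4^2$, $B=p_1p_2+p_3p_4$, $C=p_1p_4-p_2p_3$. Then there exist integers $a,b,\gamma$ such that $$\Delta:=bA+2(\gamma-a)B+(1-b^2+4a\gamma)C$$ is relatively prime to $q$.
   Context: Equivalently, $\Delta=r_1r_4-r_2r_3$ where $r_1=-p_1-2\gamma p_3+bp_4$, $r_2=p_2+2ap_4-bp_3$, $r_3=p_3-2\gamma p_1+bp_2$, $r_4=-p_4+2ap_2-bp_1$. *)

theory Defs
  imports Main
begin

end

theory Submission
  imports Defs "HOL-Computational_Algebra.Primes"
begin

lemma coprime_by_primes: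
  fixes x q :: int
  assumes "q \<noteq> 0" and "\<And>l. prime l \<Longrightarrow> l dvd q \<Longrightarrow> \<not> l dvd x"
  shows "coprime x q"
proof (rule ccontr)
  assume nc: "\<not> coprime x q"
  have "gcd x q \<noteq> 0" using assms(1) by simp
  moreover have "\<not> is_unit (gcd x q)" using nc by (simp add: coprime_iff_gcd_eq_1 is_unit_gcd)
  ultimately obtain b where "b dvd gcd x q" "prime b" using prime_divisor_exists by blast
  then show False using assms(2) by auto
qed

theorem proposition3p1:
  fixes p q p1 p2 p3 p4 :: int
  assumes "p \<ge> 1" and "q \<ge> 1" and "coprime p q"
    and "p1 \<ge> 0" and "p2 \<ge> 0" and "p3 \<ge> 0" and "p4 \<ge> 0"
    and "p = p1^2 + p2^2 + p3^2 + p4^2"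
  shows "\<exists>a b \<gamma> :: int.
           coprime (b * (p1^2 - p2^2 + p3^2 - p4^2)
                    + 2 * (\<gamma> - a) * (p1 * p2 + p3 * p4)
                    + (1 - b^2 + 4 * a * \<gamma>) * (p1 * p4 - p2 * p3)) q"
proof -
  define A where "A = p1^2 - p2^2 + p3^2 - p4^2"
  define B where "B = p1 * p2 + p3 * p4"
  define C where "C = p1 * p4 - p2 * p3"
  have ident: "A^2 + 4*B^2 + 4*C^2 = p^2"
    unfolding A_def B_def C_def assms(8) by algebra
  have pA: "p = A + 2*p2^2 + 2*p4^2" unfolding A_def assms(8) by simp
  have nolq: "\<not> l dvd p" if "prime l" "l dvd q" for l
    using assms(3) that
    by (metis coprime_common_divisor not_prime_unit)
  define SP where "SP = {l \<in> prime_factors q. \<not> l dvd A}"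
  define SR where "SR = {l \<in> prime_factors q. l dvd A \<and> \<not> l dvd B}"
  define P where "P = \<Prod>SP"
  define R where "R = \<Prod>SR"
  have finSP: "finite SP" and finSR: "finite SR" unfolding SP_def SR_def by auto
  have Pdvd: "l dvd P \<longleftrightarrow> l \<in> SP" if lp: "prime l" for l
  proof
    assume "l dvd P"
    then obtain x where "x \<in> SP" "l dvd x" using prime_dvd_prod_iff[OF finSP lp] P_def by auto
    moreover have "prime x" using \<open>x \<in> SP\<close> SP_def by auto
    ultimately show "l \<in> SP" using primes_dvd_imp_eq lp by metis
  next
    assume "l \<in> SP" then show "l dvd P" unfolding P_def using finSP by (metis dvd_prodI)
  qed
  have Rdvd: "l dvd R \<longleftrightarrow> l \<in> SR" if lp: "prime l" for l
  proof
    assume "l dvd R"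
    then obtain x where "x \<in> SR" "l dvd x" using prime_dvd_prod_iff[OF finSR lp] R_def by auto
    moreover have "prime x" using \<open>x \<in> SR\<close> SR_def by auto
    ultimately show "l \<in> SR" using primes_dvd_imp_eq lp by metis
  next
    assume "l \<in> SR" then show "l dvd R" unfolding R_def using finSR by (metis dvd_prodI)
  qed
  define D where "D = A + 2 * (P - P*R) * B + 4 * (P*R) * P * C"
  have "coprime D q"
  proof (rule coprime_by_primes)
    show "q \<noteq> 0" using assms(2) by simp
    fix l :: int assume l: "prime l" "l dvd q"
    have lpf: "l \<in> prime_factors q" using l assms(2) by (auto intro: prime_factorsI)
    show "\<not> l dvd D"
    proof (cases "l dvd A")
      case False
      then have "l dvd P" using Pdvd l lpf SP_def by auto
      then have "l dvd D - A" unfolding D_def by simp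
      then show ?thesis using False by (metis dvd_diff_commute dvd_add_right_iff diff_add_cancel)
    next
      case True
      have nP: "\<not> l dvd P" using Pdvd l True SP_def by auto
      have n2: "\<not> l dvd 2"
      proof
        assume "l dvd 2"
        then have "l dvd A + 2*p2^2 + 2*p4^2" using True by simp
        then show False using pA nolq l by metis
      qed
      show ?thesis
      proof (cases "l dvd B")
        case False
        then have "l dvd R" using Rdvd l lpf True SR_def by auto
        then have "l dvd D - 2 * P * B" unfolding D_def using True
          by (simp add: algebra_simps)
        moreover have "\<not> l dvd 2 * P * B" using n2 nP False l
          by (simp add: prime_dvd_mult_iff)
        ultimately show ?thesis using dvd_diff[of l D "D - 2 * P * B"] by auto
      next
        case Bt: True
        have nR: "\<not> l dvd R" using Rdvd l Bt SR_def by auto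
        have nC: "\<not> l dvd C"
        proof
          assume "l dvd C"
          then have "l dvd A^2 + 4*B^2 + 4*C^2" using True Bt by (simp add: power2_eq_square)
          then have "l dvd p^2" using ident by simp
          then show False using nolq l prime_dvd_power by metis
        qed
        have "l dvd D - 4 * P * R * P * C" unfolding D_def using True Bt
          by (simp add: algebra_simps)
        moreover have "\<not> l dvd 4 * P * R * P * C"
        proof -
          have "\<not> l dvd 4" using n2 l
            by (metis dvd_mult mult_2_right numeral_Bit0 prime_dvd_mult_iff one_add_one)
          then show ?thesis using nP nR nC l by (simp add: prime_dvd_mult_iff)
        qed
        ultimately show ?thesis using dvd_diff[of l D "D - 4 * P * R * P * C"] by auto
      qed
    qed
  qed
  then show ?thesis
    by (intro exI[of _ "P*R"] exI[of _ 1] exI[of _ P])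
       (simp add: D_def A_def B_def C_def algebra_simps)
qed

end
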